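(* For every $n\ge4$, the matroid $L_n$ is not liftable.
   Context: For $n\ge4$, $L_n$ is the rank-three paving matroid arising from $n$ lines in general position in $\mathbb{P}^2$ and their $\binom n2$ pairwise intersection points: equivalently, its ground set is the set of 2-element subsets $\{i,j\}\subseteq[n]$, and its lines (dependent hyperplanes) are $\ell_i=\{\{i,j\}:j\ne i\}$ for $i\in[n]$; its circuits are the 3-subsets of some $\ell_i$ and the 4-subsets containing no 3-subset of any $\ell_i$. For a matroid $N$ on a finite set $E$, the circuit variety $V_{\mathcal{C}(N)}$ is the set of tuples $(\gamma_e)_{e\in E}$ in $\mathbb{C}^3$ with $(\gamma_e)_{e\in S}$ linearly dependent for every dependent set $S$. $N$ is liftable if for every tuple $(\gamma_e)_{e\in E}$ in $\mathbb{C}^3$ spanning a plane $H$ and every $q\notin H$ there exist scalars $z_e$ such that $(\gamma_e+z_eq)\in V_{\mathcal{C}(N)}$ and the vectors $\gamma_e+z_eq$ do not all lie in a common plane. *)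

theory Defs
  imports "HOL-Analysis.Analysis"
begin

type_synonym cvec3 = "complex ^ 3"

definition fam_dependent :: "('e \<Rightarrow> cvec3) \<Rightarrow> 'e set \<Rightarrow> bool" where
  "fam_dependent \<gamma> S \<longleftrightarrow>
     (\<exists>c :: 'e \<Rightarrow> complex. (\<exists>e\<in>S. c e \<noteq> 0) \<and> (\<Sum>e\<in>S. c e *s \<gamma> e) = 0)"

definition circuit_variety :: "'e set \<Rightarrow> ('e set \<Rightarrow> bool) \<Rightarrow> ('e \<Rightarrow> cvec3) set" where
  "circuit_variety E dep = {\<gamma>. \<forall>S. S \<subseteq> E \<and> dep S \<longrightarrow> fam_dependent \<gamma> S}"

definition is_plane :: "cvec3 set \<Rightarrow> bool" where
  "is_plane H \<longleftrightarrow> vec.subspace H \<and> vec.dim H = 2"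

definition liftable :: "'e set \<Rightarrow> ('e set \<Rightarrow> bool) \<Rightarrow> bool" where
  "liftable E dep \<longleftrightarrow>
    (\<forall>\<gamma> :: 'e \<Rightarrow> cvec3. \<forall>H q.
       is_plane H \<and> vec.span (\<gamma> ` E) = H \<and> q \<notin> H \<longrightarrow>
       (\<exists>z :: 'e \<Rightarrow> complex.
          (\<lambda>e. \<gamma> e + z e *s q) \<in> circuit_variety E dep \<and>
          \<not> (\<exists>P. is_plane P \<and> (\<forall>e\<in>E. \<gamma> e + z e *s q \<in> P))))"

definition Ln_ground :: "nat \<Rightarrow> nat set set" where
  "Ln_ground n = {{i, j} | i j. i \<in> {1..n} \<and> j \<in> {1..n} \<and> i \<noteq> j}"

definition Ln_line :: "nat \<Rightarrow> nat \<Rightarrow> nat set set" where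
  "Ln_line n i = {e \<in> Ln_ground n. i \<in> e}"

definition Ln_circuit :: "nat \<Rightarrow> nat set set \<Rightarrow> bool" where
  "Ln_circuit n C \<longleftrightarrow> C \<subseteq> Ln_ground n \<and>
     ((card C = 3 \<and> (\<exists>i\<in>{1..n}. C \<subseteq> Ln_line n i)) \<or>
      (card C = 4 \<and> \<not> (\<exists>T\<subseteq>C. card T = 3 \<and> (\<exists>i\<in>{1..n}. T \<subseteq> Ln_line n i))))"

definition Ln_dependent :: "nat \<Rightarrow> nat set set \<Rightarrow> bool" where
  "Ln_dependent n S \<longleftrightarrow> S \<subseteq> Ln_ground n \<and> (\<exists>C\<subseteq>S. Ln_circuit n C)"

end

theory Submission
  imports Defs
begin

lemma vec3_eq: "(x::cvec3) = y \<longleftrightarrow> x$1 = y$1 \<and> x$2 = y$2 \<and> x$3 = y$3"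
  by (auto simp: vec_eq_iff forall_3)

lemma dep_key:
  fixes w :: "'e \<Rightarrow> cvec3"
  assumes d: "fam_dependent w {e,f,g}" and dist: "e \<noteq> f" "e \<noteq> g" "f \<noteq> g"
    and we: "w e $ 1 = 1" "w e $ 2 = 0"
    and wf: "w f $ 1 = 0" "w f $ 2 = 1"
  shows "w g $ 3 = w g $ 1 * w e $ 3 + w g $ 2 * w f $ 3"
proof -
  obtain c where c: "\<exists>x\<in>{e,f,g}. c x \<noteq> 0" and s: "(\<Sum>x\<in>{e,f,g}. c x *s w x) = 0"
    using d unfolding fam_dependent_def by blast
  have s2: "c e *s w e + c f *s w f + c g *s w g = 0" using s dist by (simp add: add.assoc)
  have h1: "c e + c g * w g $ 1 = 0" using arg_cong[OF s2, of "\<lambda>v. v$1"] we wf by simp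
  have h2: "c f + c g * w g $ 2 = 0" using arg_cong[OF s2, of "\<lambda>v. v$2"] we wf by simp
  have h3: "c e * w e $ 3 + c f * w f $ 3 + c g * w g $ 3 = 0" using arg_cong[OF s2, of "\<lambda>v. v$3"] by simp
  have "c g \<noteq> 0" using c h1 h2 by auto
  moreover have "c g * (w g $ 3 - (w g $ 1 * w e $ 3 + w g $ 2 * w f $ 3)) = 0"
    using h1 h2 h3 by (simp add: algebra_simps eq_neg_iff_add_eq_0[symmetric] add_eq_0_iff2)
  ultimately show ?thesis by simp
qed

lemma plane_span2:
  fixes u v :: cvec3
  assumes "u$1 = 1" "u$2 = 0" "v$1 = 0" "v$2 = 1"
  shows "is_plane (vec.span {u, v})"
proof -
  have uv: "u \<noteq> v" using assms by auto
  have "u \<noteq> 0" using assms by auto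
  hence i1: "vec.independent {u}" by (simp add: vec.independent_insert)
  have "v \<notin> vec.span {u}"
  proof
    assume "v \<in> vec.span {u}"
    then obtain k where "v = k *s u" by (auto simp: vec.span_singleton)
    hence "v$1 = k" "v$2 = 0" using assms by auto
    thus False using assms by simp
  qed
  hence "vec.independent {v, u}" using i1 vec.independent_insertI by blast
  hence "vec.dim (vec.span {v,u}) = 2" using uv by (simp add: vec.dim_eq_card_independent)
  thus ?thesis unfolding is_plane_def by (simp add: insert_commute)
qed


lemma edge_line1: "i \<in> {1..n} \<Longrightarrow> j \<in> {1..n} \<Longrightarrow> i \<noteq> j \<Longrightarrow> {i,j} \<in> Ln_line n i"
  unfolding Ln_line_def Ln_ground_def by blast

lemma edge_line2: "i \<in> {1..n} \<Longrightarrow> j \<in> {1..n} \<Longrightarrow> i \<noteq> j \<Longrightarrow> {i,j} \<in> Ln_line n j"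
  unfolding Ln_line_def Ln_ground_def by blast

lemma line_rel:
  assumes cv: "v \<in> circuit_variety (Ln_ground n) (Ln_dependent n)" and i: "i \<in> {1..n}"
    and e: "e \<in> Ln_line n i" and f: "f \<in> Ln_line n i" and ef: "e \<noteq> f"
    and ve: "v e $ 1 = 1" "v e $ 2 = 0" and vf: "v f $ 1 = 0" "v f $ 2 = 1"
    and g: "g \<in> Ln_line n i"
  shows "v g $ 3 = v g $ 1 * v e $ 3 + v g $ 2 * v f $ 3"
proof (cases "g = e \<or> g = f")
  case True
  then show ?thesis using ve vf by auto
next
  case False
  let ?S = "{e,f,g}"
  have sub: "?S \<subseteq> Ln_line n i" using e f g by auto
  hence subg: "?S \<subseteq> Ln_ground n" unfolding Ln_line_def by auto
  have "g \<noteq> e" "g \<noteq> f" using False by auto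
  hence "card ?S = 3" using ef by simp
  hence "Ln_circuit n ?S" using sub subg i unfolding Ln_circuit_def by blast
  hence "Ln_dependent n ?S" using subg unfolding Ln_dependent_def by blast
  hence "fam_dependent v ?S" using cv subg unfolding circuit_variety_def by blast
  thus ?thesis using dep_key[of v e f g] False ef ve vf by auto
qed

theorem lemma6p3:
  fixes n :: nat
  assumes "n \<ge> 4"
  shows "\<not> liftable (Ln_ground n) (Ln_dependent n)"
proof -
  define A :: cvec3 where "A = vector [1,0,0]"
  define B :: cvec3 where "B = vector [0,1,0]"
  define C :: cvec3 where "C = vector [1,1,0]"
  define q :: cvec3 where "q = vector [0,0,1]"
  define gam :: "nat set \<Rightarrow> cvec3" where "gam e = (if e = {1,3} \<or> e = {2,4} \<or> (\<exists>j\<ge>5. e = {1,j}) then A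
      else if e = {1,4} then C else B)" for e
  define H where "H = vec.span {A, B}"
  define E where "E = Ln_ground n"
  have n1: "(1::nat) \<in> {1..n}" "(2::nat) \<in> {1..n}" "(3::nat) \<in> {1..n}" "(4::nat) \<in> {1..n}"
    using assms by auto
  have gvals: "gam {1,2} = B" "gam {1,3} = A" "gam {1,4} = C" "gam {2,3} = B" "gam {2,4} = A"
     "gam {3,4} = B" "\<And>j. j \<ge> 5 \<Longrightarrow> gam {1,j} = A" "\<And>j. j \<ge> 5 \<Longrightarrow> gam {3,j} = B"
    unfolding gam_def by (auto simp: doubleton_eq_iff)
  have planeH: "is_plane H" unfolding H_def by (rule plane_span2) (auto simp: A_def B_def)
  have "{A, B} \<subseteq> gam ` E"
  proof -
    have "{1,3} \<in> E" "{1,2} \<in> E" using edge_line1[OF n1(1) n1(3)] edge_line1[OF n1(1) n1(2)]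
      unfolding E_def Ln_line_def by auto
    thus ?thesis using gvals by (metis empty_subsetI image_eqI insert_subset)
  qed
  hence s1: "H \<subseteq> vec.span (gam ` E)" unfolding H_def by (rule vec.span_mono)
  have CH: "C \<in> H"
  proof -
    have "C = A + B" by (simp add: A_def B_def C_def vec3_eq)
    thus ?thesis unfolding H_def by (simp add: vec.span_add vec.span_base)
  qed
  have "gam ` E \<subseteq> H" unfolding gam_def using CH by (auto simp: H_def vec.span_base)
  hence "vec.span (gam ` E) \<subseteq> H" using vec.span_minimal[of "gam ` E" H] H_def by auto
  with s1 have spanH: "vec.span (gam ` E) = H" by auto
  have "vec.subspace {x::cvec3. x $ 3 = 0}" unfolding vec.subspace_def by auto
  moreover have "{A, B} \<subseteq> {x::cvec3. x $ 3 = 0}" by (auto simp: A_def B_def)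
  ultimately have "H \<subseteq> {x::cvec3. x $ 3 = 0}" unfolding H_def using vec.span_minimal by blast
  hence qH: "q \<notin> H" by (auto simp: q_def)
  have main: "\<exists>P. is_plane P \<and> (\<forall>e\<in>E. gam e + z e *s q \<in> P)"
    if cv: "(\<lambda>e. gam e + z e *s q) \<in> circuit_variety E (Ln_dependent n)" for z
  proof -
    define v where "v = (\<lambda>e. gam e + z e *s q)"
    have cv': "v \<in> circuit_variety (Ln_ground n) (Ln_dependent n)" using cv by (simp add: v_def E_def)
    have vc: "v e $ 1 = gam e $ 1" "v e $ 2 = gam e $ 2" "v e $ 3 = z e" for e
      by (auto simp: v_def q_def gam_def A_def B_def C_def)
    define \<alpha> where "\<alpha> = z {1,3}"
    define \<beta> where "\<beta> = z {1,2}"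
    note LR = line_rel[OF cv']
    have key: "\<forall>g\<in>Ln_line n i. z g = gam g $ 1 * \<alpha> + gam g $ 2 * \<beta>" if i: "i \<in> {1..n}" for i
    proof -
      have L: "{a,b} \<in> Ln_line n a" "{b,a} \<in> Ln_line n a" if "a \<in> {1..n}" "b \<in> {1..n}" "a \<noteq> b" for a b
        using edge_line1[OF that] edge_line2[OF that(2,1) that(3)[symmetric]] by auto
      have cA: "A $ 1 = 1" "A $ 2 = 0" and cB: "B $ 1 = 0" "B $ 2 = 1" and cC: "C $ 1 = 1" "C $ 2 = 1"
        by (auto simp: A_def B_def C_def)
      have ne: "{1,2} \<noteq> {1,(3::nat)}" "{2,3} \<noteq> {1,(3::nat)}" "{2,4} \<noteq> {1,(2::nat)}"
           "{2,4} \<noteq> {3,(4::nat)}" "\<And>j::nat. j \<ge> 5 \<Longrightarrow> {1,j} \<noteq> {3,j}"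
        by (auto simp: doubleton_eq_iff)
      have nq: "(1::nat) \<noteq> 2" "(1::nat) \<noteq> 3" "(1::nat) \<noteq> 4" "(2::nat) \<noteq> 1" "(2::nat) \<noteq> 3" "(2::nat) \<noteq> 4"
        "(3::nat) \<noteq> 1" "(3::nat) \<noteq> 2" "(3::nat) \<noteq> 4" "(4::nat) \<noteq> 1" "(4::nat) \<noteq> 2" "(4::nat) \<noteq> 3" by auto
      have R1: "\<forall>g\<in>Ln_line n 1. z g = gam g $ 1 * \<alpha> + gam g $ 2 * \<beta>"
        using LR[OF n1(1) L(1)[OF n1(1) n1(3) nq(2)] L(1)[OF n1(1) n1(2) nq(1)] ne(1)[symmetric]] gvals cA cB
        by (simp add: vc \<alpha>_def \<beta>_def)
      have z23: "z {2,3} = \<beta>"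
        using LR[OF n1(2) L(1)[OF n1(2) n1(4) nq(6)] L(2)[OF n1(2) n1(1) nq(4)] ne(3), of "{2,3}"] L(1)[OF n1(2) n1(3) nq(5)] gvals cA cB
        by (simp add: vc \<beta>_def insert_commute)
      have R3: "\<forall>g\<in>Ln_line n 3. z g = gam g $ 1 * \<alpha> + gam g $ 2 * \<beta>"
        using LR[OF n1(3) L(2)[OF n1(3) n1(1) nq(7)] L(2)[OF n1(3) n1(2) nq(8)] ne(2)[symmetric]] gvals cA cB z23
        by (simp add: vc \<alpha>_def)
      have z34: "z {3,4} = \<beta>" using R3 L(1)[OF n1(3) n1(4) nq(9)] gvals cB by auto
      have z14: "z {1,4} = \<alpha> + \<beta>" using R1 L(1)[OF n1(1) n1(4) nq(3)] gvals cC by auto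
      have z14': "z {1,4} = z {2,4} + \<beta>"
        using LR[OF n1(4) L(2)[OF n1(4) n1(2) nq(11)] L(2)[OF n1(4) n1(3) nq(12)] ne(4), of "{1,4}"] L(2)[OF n1(4) n1(1) nq(10)] gvals cA cB cC z34
        by (simp add: vc)
      have z24: "z {2,4} = \<alpha>" using z14 z14' by simp
      show ?thesis
      proof (cases "i \<ge> 5")
        case True
        have i1: "1 \<noteq> i" "3 \<noteq> i" using True by auto
        have a: "z {1,i} = \<alpha>" using R1 L(1)[OF n1(1) i i1(1)] gvals(7)[OF True] cA by auto
        have b: "z {3,i} = \<beta>" using R3 L(1)[OF n1(3) i i1(2)] gvals(8)[OF True] cB by auto
        show ?thesis
          using LR[OF i L(2)[OF i n1(1) i1(1)[symmetric]] L(2)[OF i n1(3) i1(2)[symmetric]] ne(5)[OF True]]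
            gvals(7,8)[OF True] cA cB a b by (simp add: vc insert_commute)
      next
        case False
        then have "i = 1 \<or> i = 2 \<or> i = 3 \<or> i = 4" using i by auto
        moreover have "\<forall>g\<in>Ln_line n 2. z g = gam g $ 1 * \<alpha> + gam g $ 2 * \<beta>"
          using LR[OF n1(2) L(1)[OF n1(2) n1(4) nq(6)] L(2)[OF n1(2) n1(1) nq(4)] ne(3)] gvals cA cB z24
          by (simp add: vc \<beta>_def insert_commute)
        moreover have "\<forall>g\<in>Ln_line n 4. z g = gam g $ 1 * \<alpha> + gam g $ 2 * \<beta>"
          using LR[OF n1(4) L(2)[OF n1(4) n1(2) nq(11)] L(2)[OF n1(4) n1(3) nq(12)] ne(4)] gvals cA cB z24 z34
          by (simp add: vc)
        ultimately show ?thesis using R1 R3 by auto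
      qed
    qed
    define u1 :: cvec3 where "u1 = vector [1,0,\<alpha>]"
    define u2 :: cvec3 where "u2 = vector [0,1,\<beta>]"
    have pl: "is_plane (vec.span {u1,u2})" by (rule plane_span2) (auto simp: u1_def u2_def)
    have "v e \<in> vec.span {u1,u2}" if e: "e \<in> E" for e
    proof -
      obtain i j where ij: "e = {i,j}" "i \<in> {1..n}" "j \<in> {1..n}" "i \<noteq> j"
        using e unfolding E_def Ln_ground_def by blast
      have "e \<in> Ln_line n i" using edge_line1[OF ij(2-4)] ij(1) by simp
      hence ze: "z e = gam e $ 1 * \<alpha> + gam e $ 2 * \<beta>" using key[OF ij(2)] by blast
      have "v e = (gam e $ 1) *s u1 + (gam e $ 2) *s u2"
        using vc[of e] ze by (simp add: vec3_eq u1_def u2_def)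
      thus ?thesis by (simp add: vec.span_add vec.span_scale vec.span_base)
    qed
    thus ?thesis using pl unfolding v_def by blast
  qed
  show ?thesis unfolding liftable_def
    using planeH spanH qH main unfolding E_def by blast
qed

end
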